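(* Let $\Phi$ be a first-order sentence, $A$ a unary predicate, $R$ a binary predicate, and $U$ and $B$ fresh unary and binary predicates, respectively, that do not occur in $\Phi$, and let $r,k$ be non-negative integers with $0 \le r < k$. Define $\Upsilon_1 = \forall x\, \exists^{=r, k} y : B(x, y)$, $\Upsilon_2 = (|U| = r)$, $\Upsilon_3 = \forall x \forall y : (A(x) \land B(x, y) \to U(y))$, $\Upsilon_4 = \forall x \forall y : \neg A(x) \to (B(x, y) \leftrightarrow R(x, y))$. Extend the weighting functions $(w,\bar w)$ by $w(U)=\bar w(U)=w(B)=\bar w(B)=1$. Then for every domain size $n$ with $r,k<n$, $$\mathsf{WFOMC}\big(\Phi \land \forall x : (A(x) \lor \exists^{=r,k} y : R(x, y)), n, w, \bar{w}\big) = \frac{1}{\binom{n}{r}} \mathsf{WFOMC}(\Phi \land \Upsilon_1 \land \Upsilon_2 \land \Upsilon_3 \land \Upsilon_4, n, w, \bar{w}).$$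
   Context: Function-free first-order logic over the domain $[n]=\{1,\dots,n\}$. $\exists^{=r,k} y:\phi(y)$ holds iff the number of domain elements $c$ with $\phi(c)$ is congruent to $r$ modulo $k$. $|U|=r$ is a cardinality constraint: exactly $r$ ground atoms $U(c)$ are true. A weighting is a pair of functions $w,\bar w$ from predicates to $\mathbb{R}$; the weight of a model (set of ground literals) is the product of $w(P)$ over its true ground literals of predicate $P$ and $\bar w(P)$ over its false ones; $\mathsf{WFOMC}(\Gamma,n,w,\bar w)$ is the sum of the weights of all models of $\Gamma$ over $[n]$. *)

theory Defs
  imports Complex_Main
begin

text \<open>A model is a set of ground atoms (p, tuple).\<close>

datatype 'p form =
    Atom 'p "nat list"
  | Top
  | Bot
  | Neg "'p form"
  | Conj "'p form" "'p form"
  | Disj "'p form" "'p form"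
  | Imp "'p form" "'p form"
  | Iff "'p form" "'p form"
  | Ex nat "'p form"
  | All nat "'p form"
  | ExMod nat nat nat "'p form"   \<comment> \<open>ExMod r k y phi:  exists^{=r,k} y : phi\<close>
  | CardEq 'p nat                 \<comment> \<open>CardEq U r:  |U| = r\<close>

fun fv :: "'p form \<Rightarrow> nat set" where
  "fv (Atom p vs) = set vs"
| "fv Top = {}"
| "fv Bot = {}"
| "fv (Neg f) = fv f"
| "fv (Conj f g) = fv f \<union> fv g"
| "fv (Disj f g) = fv f \<union> fv g"
| "fv (Imp f g) = fv f \<union> fv g"
| "fv (Iff f g) = fv f \<union> fv g"
| "fv (Ex x f) = fv f - {x}"
| "fv (All x f) = fv f - {x}"
| "fv (ExMod r k x f) = fv f - {x}"
| "fv (CardEq p r) = {}"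

fun preds :: "'p form \<Rightarrow> 'p set" where
  "preds (Atom p vs) = {p}"
| "preds Top = {}"
| "preds Bot = {}"
| "preds (Neg f) = preds f"
| "preds (Conj f g) = preds f \<union> preds g"
| "preds (Disj f g) = preds f \<union> preds g"
| "preds (Imp f g) = preds f \<union> preds g"
| "preds (Iff f g) = preds f \<union> preds g"
| "preds (Ex x f) = preds f"
| "preds (All x f) = preds f"
| "preds (ExMod r k x f) = preds f"
| "preds (CardEq p r) = {p}"

fun plain_fo :: "'p form \<Rightarrow> bool" where
  "plain_fo (Atom p vs) = True"
| "plain_fo Top = True"
| "plain_fo Bot = True"
| "plain_fo (Neg f) = plain_fo f"
| "plain_fo (Conj f g) = (plain_fo f \<and> plain_fo g)"
| "plain_fo (Disj f g) = (plain_fo f \<and> plain_fo g)"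
| "plain_fo (Imp f g) = (plain_fo f \<and> plain_fo g)"
| "plain_fo (Iff f g) = (plain_fo f \<and> plain_fo g)"
| "plain_fo (Ex x f) = plain_fo f"
| "plain_fo (All x f) = plain_fo f"
| "plain_fo (ExMod r k x f) = False"
| "plain_fo (CardEq p r) = False"

definition fo_sentence :: "'p form \<Rightarrow> bool" where
  "fo_sentence f \<longleftrightarrow> plain_fo f \<and> fv f = {}"

fun eval :: "nat \<Rightarrow> ('p \<times> nat list) set \<Rightarrow> (nat \<Rightarrow> nat) \<Rightarrow> 'p form \<Rightarrow> bool" where
  "eval n M e (Atom p vs) = ((p, map e vs) \<in> M)"
| "eval n M e Top = True"
| "eval n M e Bot = False"
| "eval n M e (Neg f) = (\<not> eval n M e f)"
| "eval n M e (Conj f g) = (eval n M e f \<and> eval n M e g)"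
| "eval n M e (Disj f g) = (eval n M e f \<or> eval n M e g)"
| "eval n M e (Imp f g) = (eval n M e f \<longrightarrow> eval n M e g)"
| "eval n M e (Iff f g) = (eval n M e f \<longleftrightarrow> eval n M e g)"
| "eval n M e (Ex x f) = (\<exists>c\<in>{1..n}. eval n M (e(x := c)) f)"
| "eval n M e (All x f) = (\<forall>c\<in>{1..n}. eval n M (e(x := c)) f)"
| "eval n M e (ExMod r k x f) =
     (card {c\<in>{1..n}. eval n M (e(x := c)) f} mod k = r mod k)"
| "eval n M e (CardEq p r) = (card {t. (p, t) \<in> M} = r)"

definition ground_atoms :: "('p \<Rightarrow> nat) \<Rightarrow> 'p set \<Rightarrow> nat \<Rightarrow> ('p \<times> nat list) set" where
  "ground_atoms ar V n = {(p, t). p \<in> V \<and> length t = ar p \<and> set t \<subseteq> {1..n}}"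

definition model_weight ::
  "('p \<Rightarrow> nat) \<Rightarrow> 'p set \<Rightarrow> nat \<Rightarrow> ('p \<Rightarrow> real) \<Rightarrow> ('p \<Rightarrow> real) \<Rightarrow> ('p \<times> nat list) set \<Rightarrow> real" where
  "model_weight ar V n w wb M =
     (\<Prod>g\<in>ground_atoms ar V n. if g \<in> M then w (fst g) else wb (fst g))"

text \<open>The sentence is
evaluated in an arbitrary fixed environment (irrelevant for sentences).\<close>
definition WFOMC ::
  "('p \<Rightarrow> nat) \<Rightarrow> 'p form \<Rightarrow> nat \<Rightarrow> ('p \<Rightarrow> real) \<Rightarrow> ('p \<Rightarrow> real) \<Rightarrow> real" where
  "WFOMC ar \<Gamma> n w wb =
     (\<Sum>M\<in>{M. M \<subseteq> ground_atoms ar (preds \<Gamma>) n \<and> eval n M (\<lambda>_. 1) \<Gamma>}.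
        model_weight ar (preds \<Gamma>) n w wb M)"

end

theory Submission imports Defs begin

lemma eval_local:
  "(\<And>p t. p \<in> preds f \<Longrightarrow> (p,t) \<in> M \<longleftrightarrow> (p,t) \<in> M') \<Longrightarrow> eval n M e f = eval n M' e f"
proof (induction f arbitrary: e)
  case (CardEq p r)
  then show ?case by auto
qed auto

lemma finite_preds: "finite (preds f)"
  by (induction f) auto

lemma finite_ga: "finite V \<Longrightarrow> finite (ground_atoms ar V n)"
proof -
  assume "finite V"
  have "ground_atoms ar V n = (\<Union>p\<in>V. {p} \<times> {t. set t \<subseteq> {1..n} \<and> length t = ar p})"
    unfolding ground_atoms_def by auto
  then show ?thesis using \<open>finite V\<close> by (simp add: finite_lists_length_eq)
qed

theorem lemma3:
  fixes ar :: "'p \<Rightarrow> nat" and \<Phi> :: "'p form" and A R U B :: 'p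
    and r k n :: nat and w wb :: "'p \<Rightarrow> real"
  assumes "fo_sentence \<Phi>"
    and "ar A = 1" and "ar R = 2" and "ar U = 1" and "ar B = 2"
    and "U \<notin> preds \<Phi>" and "B \<notin> preds \<Phi>"
    and "U \<noteq> A" and "U \<noteq> R" and "B \<noteq> A" and "B \<noteq> R"
    and "r < k" and "r < n" and "k < n"
    and "w U = 1" and "wb U = 1" and "w B = 1" and "wb B = 1"
  shows "WFOMC ar (Conj \<Phi> (All 0 (Disj (Atom A [0]) (ExMod r k 1 (Atom R [0, 1]))))) n w wb
       = 1 / real (n choose r) *
         WFOMC ar
           (Conj \<Phi>
             (Conj (All 0 (ExMod r k 1 (Atom B [0, 1])))
               (Conj (CardEq U r)
                 (Conj (All 0 (All 1 (Imp (Conj (Atom A [0]) (Atom B [0, 1])) (Atom U [1]))))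
                       (All 0 (All 1 (Imp (Neg (Atom A [0])) (Iff (Atom B [0, 1]) (Atom R [0, 1])))))))))
           n w wb"
  (is "WFOMC ar ?L n w wb = _ * WFOMC ar ?R n w wb")
proof -
  note ar = assms(2-5)
  have UB: "U \<noteq> B" using ar by auto
  have AR: "A \<noteq> R" using ar by auto
  have rmod: "r mod k = r" using assms(12) by simp
  define V1 where "V1 = preds ?L"
  define V2 where "V2 = preds ?R"
  have V1: "V1 = insert A (insert R (preds \<Phi>))" by (auto simp: V1_def)
  have V2: "V2 = insert U (insert B V1)" by (auto simp: V1 V2_def)
  have UV1: "U \<notin> V1" and BV1: "B \<notin> V1" using assms(6-11) by (auto simp: V1)
  define GA1 where "GA1 = ground_atoms ar V1 n"
  define GA2 where "GA2 = ground_atoms ar V2 n"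
  have fin1: "finite GA1" unfolding GA1_def by (rule finite_ga) (simp add: V1_def finite_preds)
  have fin2: "finite GA2" unfolding GA2_def by (rule finite_ga) (simp add: V2_def finite_preds)
  have GA12: "GA1 \<subseteq> GA2" by (auto simp: GA1_def GA2_def ground_atoms_def V2)
  define e0 where "e0 = (\<lambda>_::nat. 1::nat)"
  define S1 where "S1 = {M. M \<subseteq> GA1 \<and> eval n M e0 ?L}"
  define S2 where "S2 = {M. M \<subseteq> GA2 \<and> eval n M e0 ?R}"
  have W1: "WFOMC ar ?L n w wb = sum (model_weight ar V1 n w wb) S1"
    by (simp add: WFOMC_def S1_def V1_def GA1_def e0_def)
  have W2: "WFOMC ar ?R n w wb = sum (model_weight ar V2 n w wb) S2"
    by (simp add: WFOMC_def S2_def V2_def GA2_def e0_def)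
  have evL: "eval n M e0 ?L \<longleftrightarrow> eval n M e0 \<Phi> \<and>
     (\<forall>c\<in>{1..n}. (A,[c]) \<in> M \<or> card {d\<in>{1..n}. (R,[c,d]) \<in> M} mod k = r)" for M
    by (simp add: rmod)
  have evR: "eval n M e0 ?R \<longleftrightarrow> eval n M e0 \<Phi> \<and>
     (\<forall>c\<in>{1..n}. card {d\<in>{1..n}. (B,[c,d]) \<in> M} mod k = r) \<and>
     card {t. (U,t) \<in> M} = r \<and>
     (\<forall>c\<in>{1..n}. \<forall>d\<in>{1..n}. (A,[c]) \<in> M \<and> (B,[c,d]) \<in> M \<longrightarrow> (U,[d]) \<in> M) \<and>
     (\<forall>c\<in>{1..n}. \<forall>d\<in>{1..n}. (A,[c]) \<notin> M \<longrightarrow> ((B,[c,d]) \<in> M \<longleftrightarrow> (R,[c,d]) \<in> M))" for M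
    by (simp add: rmod)
  define \<pi> where "\<pi> M = M \<inter> GA1" for M :: "('p \<times> nat list) set"
  have piM: "(p,t) \<in> \<pi> M \<longleftrightarrow> (p,t) \<in> M" if "M \<subseteq> GA2" "p \<in> V1" for M p t
    using that by (auto simp: \<pi>_def GA1_def GA2_def ground_atoms_def V2)
  have inGA2: "(p,t) \<in> M \<Longrightarrow> M \<subseteq> GA2 \<Longrightarrow> p \<in> V2 \<and> length t = ar p \<and> set t \<subseteq> {1..n}" for M p t
    by (auto simp: GA2_def ground_atoms_def)
  have inGA1: "(p,t) \<in> L \<Longrightarrow> L \<subseteq> GA1 \<Longrightarrow> p \<in> V1 \<and> length t = ar p \<and> set t \<subseteq> {1..n}" for L p t
    by (auto simp: GA1_def ground_atoms_def)
  have AGA1: "c \<in> {1..n} \<Longrightarrow> (A,[c]) \<in> GA1" for c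
    using ar by (auto simp: GA1_def ground_atoms_def V1)
  have RGA1: "c \<in> {1..n} \<Longrightarrow> d \<in> {1..n} \<Longrightarrow> (R,[c,d]) \<in> GA1" for c d
    using ar by (auto simp: GA1_def ground_atoms_def V1)
  have projS1: "\<pi> M \<in> S1" if "M \<in> S2" for M
  proof -
    have M2: "M \<subseteq> GA2" and eR: "eval n M e0 ?R" using that by (auto simp: S2_def)
    have "eval n (\<pi> M) e0 \<Phi> = eval n M e0 \<Phi>"
      by (rule eval_local) (rule piM[OF M2], simp add: V1)
    moreover have "(A,[c]) \<in> \<pi> M \<or> card {d\<in>{1..n}. (R,[c,d]) \<in> \<pi> M} mod k = r" if c: "c \<in> {1..n}" for c
    proof (cases "(A,[c]) \<in> M")
      case True then show ?thesis using piM[OF M2, of A] by (simp add: V1)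
    next
      case False
      have "{d\<in>{1..n}. (R,[c,d]) \<in> \<pi> M} = {d\<in>{1..n}. (B,[c,d]) \<in> M}"
        using eR False c piM[OF M2, of R] by (auto simp: evR V1)
      moreover have "card {d\<in>{1..n}. (B,[c,d]) \<in> M} mod k = r" using eR c unfolding evR by blast
      ultimately show ?thesis by simp
    qed
    moreover have "eval n M e0 \<Phi>" using eR unfolding evR by blast
    moreover have "\<pi> M \<subseteq> GA1" by (simp add: \<pi>_def)
    ultimately show ?thesis unfolding S1_def mem_Collect_eq evL by blast
  qed
  have weight: "model_weight ar V2 n w wb M = model_weight ar V1 n w wb (\<pi> M)" for M
  proof -
    define GU where "GU = ground_atoms ar {U,B} n"
    have split: "GA2 = GA1 \<union> GU" by (auto simp: GA1_def GA2_def GU_def ground_atoms_def V2)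
    have disj: "GA1 \<inter> GU = {}" using UV1 BV1 by (auto simp: GA1_def GU_def ground_atoms_def)
    have finU: "finite GU" unfolding GU_def by (rule finite_ga) simp
    have one: "(\<Prod>g\<in>GU. if g \<in> M then w (fst g) else wb (fst g)) = 1"
      by (rule prod.neutral) (auto simp: GU_def ground_atoms_def assms(15-18))
    have "model_weight ar V2 n w wb M = (\<Prod>g\<in>GA1. if g \<in> M then w (fst g) else wb (fst g))"
      unfolding model_weight_def GA2_def[symmetric] split
      by (simp add: prod.union_disjoint[OF fin1 finU disj] one)
    also have "\<dots> = model_weight ar V1 n w wb (\<pi> M)"
      unfolding model_weight_def GA1_def[symmetric] by (rule prod.cong) (auto simp: \<pi>_def)
    finally show ?thesis .
  qed
  define ext where "ext L S = L \<union> (\<lambda>u. (U,[u])) ` S \<union>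
     {(B,[c,d]) | c d. c\<in>{1..n} \<and> d\<in>{1..n} \<and> (if (A,[c])\<in>L then d\<in>S else (R,[c,d])\<in>L)}"
    for L S
  define Subs where "Subs = {S. S \<subseteq> {1..n} \<and> card S = r}"
  have extU: "(U,t) \<in> ext L S \<longleftrightarrow> (\<exists>u\<in>S. t=[u])" if "L \<subseteq> GA1" for L S t
    using that inGA1[of U t L] UV1 UB by (auto simp: ext_def)
  have extB: "(B,t) \<in> ext L S \<longleftrightarrow> (\<exists>c d. t=[c,d] \<and> c\<in>{1..n} \<and> d\<in>{1..n} \<and>
        (if (A,[c])\<in>L then d\<in>S else (R,[c,d])\<in>L))" if "L \<subseteq> GA1" for L S t
    using that inGA1[of B t L] BV1 UB by (auto simp: ext_def)
  have extO: "p \<noteq> U \<Longrightarrow> p \<noteq> B \<Longrightarrow> (p,t) \<in> ext L S \<longleftrightarrow> (p,t) \<in> L" for L S p t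
    by (auto simp: ext_def)
  have Uimg: "{t. (U,t) \<in> M} = (\<lambda>u. [u]) ` {u. (U,[u]) \<in> M}" if "M \<subseteq> GA2" for M
  proof -
    have "t = [hd t]" if "(U,t) \<in> M" for t
      using inGA2[OF that \<open>M \<subseteq> GA2\<close>] ar by (cases t) auto
    then show ?thesis by force
  qed
  have cardUimg: "card ((\<lambda>u. [u]) ` X) = card X" for X :: "nat set"
    by (rule card_image) (simp add: inj_on_def)
  have fiber: "{M\<in>S2. \<pi> M = L} = ext L ` Subs" if L1: "L \<in> S1" for L
  proof
    have LGA: "L \<subseteq> GA1" and eL: "eval n L e0 ?L" using L1 by (auto simp: S1_def)
    have AL: "(A,[c]) \<in> ext L S \<longleftrightarrow> (A,[c]) \<in> L" for c S
      using extO assms(8,10) by metis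
    have RL: "(R,t) \<in> ext L S \<longleftrightarrow> (R,t) \<in> L" for t S
      using extO assms(9,11) by metis
    show "ext L ` Subs \<subseteq> {M\<in>S2. \<pi> M = L}"
    proof
      fix M assume "M \<in> ext L ` Subs"
      then obtain S where S: "S \<subseteq> {1..n}" "card S = r" and M: "M = ext L S"
        by (auto simp: Subs_def)
      have finS: "finite S" using S(1) finite_subset by blast
      have MGA: "M \<subseteq> GA2"
      proof
        fix g assume g: "g \<in> M"
        obtain p t where gpt: "g = (p,t)" by force
        show "g \<in> GA2"
        proof (cases "p = U \<or> p = B")
          case True
          have Sr: "\<forall>u\<in>S. 1 \<le> u \<and> u \<le> n" using S(1) by auto
          then show ?thesis using g gpt True ar extU[OF LGA] extB[OF LGA]
            unfolding M by (auto simp: GA2_def ground_atoms_def V2)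
        next
          case False
          then show ?thesis using g gpt extO[of p] GA12 LGA unfolding M by blast
        qed
      qed
      have piL: "\<pi> M = L"
      proof -
        have "g \<in> L" if "g \<in> M" "g \<in> GA1" for g
        proof -
          obtain p t where gpt: "g = (p,t)" by force
          have "p \<in> V1" using that(2) gpt by (auto simp: GA1_def ground_atoms_def)
          then have "p \<noteq> U" "p \<noteq> B" using UV1 BV1 by auto
          then show ?thesis using that gpt extO unfolding M by blast
        qed
        moreover have "L \<subseteq> M" unfolding M ext_def by blast
        ultimately show ?thesis using LGA unfolding \<pi>_def by blast
      qed
      have ePhi: "eval n M e0 \<Phi>"
      proof -
        have "eval n M e0 \<Phi> = eval n L e0 \<Phi>"
          by (rule eval_local) (use assms(6,7) extO in \<open>unfold M; metis\<close>)
        then show ?thesis using eL unfolding evL by blast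
      qed
      have Y1: "card {d\<in>{1..n}. (B,[c,d]) \<in> M} mod k = r" if c: "c \<in> {1..n}" for c
      proof (cases "(A,[c]) \<in> L")
        case True
        have "{d\<in>{1..n}. (B,[c,d]) \<in> M} = S" using S(1) True c unfolding M extB[OF LGA] by auto
        then show ?thesis using S(2) rmod by simp
      next
        case False
        have "{d\<in>{1..n}. (B,[c,d]) \<in> M} = {d\<in>{1..n}. (R,[c,d]) \<in> L}"
          using False c unfolding M extB[OF LGA] by auto
        moreover have "card {d\<in>{1..n}. (R,[c,d]) \<in> L} mod k = r"
          using eL c False unfolding evL by blast
        ultimately show ?thesis by simp
      qed
      have Y2: "card {t. (U,t) \<in> M} = r"
      proof -
        have "{u. (U,[u]) \<in> M} = S" unfolding M extU[OF LGA] by auto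
        then show ?thesis using Uimg[OF MGA] cardUimg S(2) by simp
      qed
      have Y3: "(U,[d]) \<in> M" if "c\<in>{1..n}" "d\<in>{1..n}" "(A,[c]) \<in> M" "(B,[c,d]) \<in> M" for c d
        using that unfolding M AL extU[OF LGA] extB[OF LGA] by auto
      have Y4: "(B,[c,d]) \<in> M \<longleftrightarrow> (R,[c,d]) \<in> M" if "c\<in>{1..n}" "d\<in>{1..n}" "(A,[c]) \<notin> M" for c d
        using that unfolding M AL RL extB[OF LGA] by auto
      have "eval n M e0 ?R" unfolding evR using ePhi Y1 Y2 Y3 Y4 by blast
      then show "M \<in> {M\<in>S2. \<pi> M = L}" using MGA piL by (simp add: S2_def)
    qed
    show "{M\<in>S2. \<pi> M = L} \<subseteq> ext L ` Subs"
    proof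
      fix M assume "M \<in> {M\<in>S2. \<pi> M = L}"
      then have MGA: "M \<subseteq> GA2" and eR: "eval n M e0 ?R" and piL: "\<pi> M = L"
        by (auto simp: S2_def)
      define S where "S = {u. (U,[u]) \<in> M}"
      have S1n: "S \<subseteq> {1..n}"
      proof
        fix u assume "u \<in> S"
        then have "(U,[u]) \<in> M" by (simp add: S_def)
        from inGA2[OF this MGA] show "u \<in> {1..n}" by simp
      qed
      have finS: "finite S" using S1n finite_subset by blast
      have cS: "card S = r" using eR Uimg[OF MGA] cardUimg unfolding evR S_def by metis
      have Y1: "card {d\<in>{1..n}. (B,[c,d]) \<in> M} mod k = r" if "c \<in> {1..n}" for c
        using eR that unfolding evR by blast
      have Y3: "(U,[d]) \<in> M" if "c\<in>{1..n}" "d\<in>{1..n}" "(A,[c]) \<in> M" "(B,[c,d]) \<in> M" for c d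
        using eR that unfolding evR by blast
      have Y4: "(B,[c,d]) \<in> M \<longleftrightarrow> (R,[c,d]) \<in> M" if "c\<in>{1..n}" "d\<in>{1..n}" "(A,[c]) \<notin> M" for c d
        using eR that unfolding evR by blast
      have memL: "(p,t) \<in> M \<longleftrightarrow> (p,t) \<in> L" if "p \<in> V1" for p t
        using piM[OF MGA that] piL by simp
      have row: "{d\<in>{1..n}. (B,[c,d]) \<in> M} = S" if c: "c \<in> {1..n}" "(A,[c]) \<in> M" for c
      proof -
        have sub: "{d\<in>{1..n}. (B,[c,d]) \<in> M} \<subseteq> S" using Y3 c by (auto simp: S_def)
        have "card {d\<in>{1..n}. (B,[c,d]) \<in> M} \<le> r" using card_mono[OF finS sub] cS by simp
        then have "card {d\<in>{1..n}. (B,[c,d]) \<in> M} = r" using Y1[OF c(1)] assms(12) by simp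
        then show ?thesis using card_subset_eq[OF finS sub] cS by simp
      qed
      have "M = ext L S"
      proof (intro set_eqI)
        fix g :: "'p \<times> nat list"
        obtain p t where gpt: "g = (p,t)" by force
        consider "p = U" | "p = B" | "p \<in> V1" | "p \<notin> V2" using V2 by blast
        then show "g \<in> M \<longleftrightarrow> g \<in> ext L S"
        proof cases
          case 1
          have "(U,t) \<in> M \<longleftrightarrow> (\<exists>u\<in>S. t=[u])"
            using Uimg[OF MGA] by (auto simp: S_def)
          then show ?thesis using 1 gpt extU[OF LGA] by simp
        next
          case 2
          have t2: "(B,t) \<in> M \<longleftrightarrow> (\<exists>c d. t=[c,d] \<and> c\<in>{1..n} \<and> d\<in>{1..n} \<and> (B,[c,d]) \<in> M)"
          proof
            assume h: "(B,t) \<in> M"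
            from inGA2[OF h MGA] ar have "length t = 2" "set t \<subseteq> {1..n}" by auto
            then obtain c d where "t = [c,d]"
              by (metis (no_types, lifting) Suc_length_conv length_0_conv numeral_2_eq_2)
            then show "\<exists>c d. t=[c,d] \<and> c\<in>{1..n} \<and> d\<in>{1..n} \<and> (B,[c,d]) \<in> M"
              using h \<open>set t \<subseteq> {1..n}\<close> by auto
          qed auto
          have cd: "(B,[c,d]) \<in> M \<longleftrightarrow> (if (A,[c])\<in>L then d\<in>S else (R,[c,d])\<in>L)"
            if cd: "c\<in>{1..n}" "d\<in>{1..n}" for c d
          proof (cases "(A,[c]) \<in> L")
            case True
            then have "(A,[c]) \<in> M" using memL[of A] by (simp add: V1)
            then have "{d\<in>{1..n}. (B,[c,d]) \<in> M} = S" using row cd(1) by blast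
            then show ?thesis using True cd(2) by auto
          next
            case False
            then have "(A,[c]) \<notin> M" using memL[of A] by (simp add: V1)
            then show ?thesis using False Y4[OF cd] memL[of R] by (simp add: V1)
          qed
          have "(B,t) \<in> M \<longleftrightarrow> (\<exists>c d. t=[c,d] \<and> c\<in>{1..n} \<and> d\<in>{1..n} \<and>
              (if (A,[c])\<in>L then d\<in>S else (R,[c,d])\<in>L))"
            unfolding t2 using cd by blast
          then show ?thesis using gpt 2 extB[OF LGA] by simp
        next
          case 3
          then have "p \<noteq> U" "p \<noteq> B" using UV1 BV1 by auto
          then show ?thesis using gpt memL[OF 3] extO by simp
        next
          case 4
          then have "p \<noteq> U" "p \<noteq> B" using V2 by auto
          moreover have "(p,t) \<notin> M" using inGA2[of p t M] MGA 4 by blast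
          moreover have "(p,t) \<notin> L" using inGA1[of p t L] LGA 4 V2 by blast
          ultimately show ?thesis using gpt extO by simp
        qed
      qed
      then show "M \<in> ext L ` Subs" using S1n cS by (auto simp: Subs_def)
    qed
  qed
  have injx: "inj_on (ext L) Subs" if L1: "L \<in> S1" for L
  proof (rule inj_onI)
    fix S S' assume "ext L S = ext L S'"
    moreover have LGA: "L \<subseteq> GA1" using L1 by (simp add: S1_def)
    ultimately show "S = S'" using extU[OF LGA] by (metis (no_types, lifting) list.inject set_eqI)
  qed
  have cSubs: "card Subs = n choose r"
    using n_subsets[of "{1..n}" r] by (simp add: Subs_def)
  have finS1: "finite S1" by (rule finite_subset[of _ "Pow GA1"]) (auto simp: S1_def fin1)
  have finS2: "finite S2" by (rule finite_subset[of _ "Pow GA2"]) (auto simp: S2_def fin2)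
  have "sum (model_weight ar V2 n w wb) S2
      = (\<Sum>L\<in>S1. sum (model_weight ar V2 n w wb) {M. M \<in> S2 \<and> \<pi> M = L})"
    by (rule sum.group[symmetric]) (use finS1 finS2 projS1 in auto)
  also have "\<dots> = (\<Sum>L\<in>S1. real (n choose r) * model_weight ar V1 n w wb L)"
  proof (rule sum.cong[OF refl])
    fix L assume L1: "L \<in> S1"
    have "sum (model_weight ar V2 n w wb) {M. M \<in> S2 \<and> \<pi> M = L}
        = sum (\<lambda>_. model_weight ar V1 n w wb L) {M. M \<in> S2 \<and> \<pi> M = L}"
      by (rule sum.cong) (auto simp: weight)
    also have "\<dots> = real (card {M. M \<in> S2 \<and> \<pi> M = L}) * model_weight ar V1 n w wb L"
      by simp
    also have "card {M. M \<in> S2 \<and> \<pi> M = L} = n choose r"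
      using fiber[OF L1] card_image[OF injx[OF L1]] cSubs by simp
    finally show "sum (model_weight ar V2 n w wb) {M. M \<in> S2 \<and> \<pi> M = L}
        = real (n choose r) * model_weight ar V1 n w wb L" .
  qed
  also have "\<dots> = real (n choose r) * sum (model_weight ar V1 n w wb) S1"
    by (simp add: sum_distrib_left)
  finally have main: "WFOMC ar ?R n w wb = real (n choose r) * WFOMC ar ?L n w wb"
    using W1 W2 by simp
  have "real (n choose r) > 0" using assms(13) by simp
  then show ?thesis using main by simp
qed
end
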